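(* Let $X$ be a complex separable Hilbert space, $A\in\mathcal B(X)$, $0<\tau<\infty$, and let $\mathcal G\subset X$ be a countable Bessel system. The following are equivalent: (1) $\{e^{tA^*}g\}_{g\in\mathcal G,\,t\in[0,\tau)}$ is a semi-continuous frame for $X$; (2) there exists $\delta>0$ such that for every finite set $T=\{t_1,\dots,t_n\}$ with $0=t_1<t_2<\dots<t_n\le t_{n+1}:=\tau$ and $|t_{i+1}-t_i|<\delta$ for all $i\in\{1,\dots,n\}$, the system $\{e^{tA^*}g\}_{g\in\mathcal G,\,t\in T}$ is a frame for $X$; (3) there exists a finite set $T=\{t_1,\dots,t_n\}$ with $0=t_1<t_2<\dots<t_n\le\tau$ such that $\{e^{tA^*}g\}_{g\in\mathcal G,\,t\in T}$ is a frame for $X$.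
   Context: $e^{tA^*}=\sum_{n\ge0}(tA^* )^n/n!$. A countable family $\{f_j\}$ in $X$ is a Bessel system if $\sum_j|\langle x,f_j\rangle|^2\le C\|x\|^2$ for all $x$, and a frame if additionally $\sum_j|\langle x,f_j\rangle|^2\ge c\|x\|^2$ for some $c>0$. The family $\{e^{tA^*}g\}_{g\in\mathcal G,t\in[0,\tau)}$ is a semi-continuous frame if there are $c_1,c_2>0$ with $c_1\|x\|^2\le\sum_{g\in\mathcal G}\int_0^\tau|\langle x,e^{tA^*}g\rangle|^2dt\le c_2\|x\|^2$ for all $x\in X$. *)

theory Defs
  imports "HOL-Analysis.Analysis"
begin

text \<open>The inner product is linear in the first argument
  and conjugate-linear in the second.\<close>

class chilbert = real_normed_vector + complete_space +
  fixes scaleC :: "complex \<Rightarrow> 'a \<Rightarrow> 'a"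
    and cinner :: "'a \<Rightarrow> 'a \<Rightarrow> complex"
  assumes scaleC_add_right: "scaleC a (x + y) = scaleC a x + scaleC a y"
    and scaleC_add_left: "scaleC (a + b) x = scaleC a x + scaleC b x"
    and scaleC_scaleC: "scaleC a (scaleC b x) = scaleC (a * b) x"
    and scaleC_one: "scaleC 1 x = x"
    and scaleR_scaleC: "scaleR r x = scaleC (complex_of_real r) x"
    and cinner_add_left: "cinner (x + y) z = cinner x z + cinner y z"
    and cinner_scaleC_left: "cinner (scaleC a x) y = a * cinner x y"
    and cinner_commute: "cinner x y = cnj (cinner y x)"
    and norm_eq_sqrt_cinner: "norm x = sqrt (Re (cinner x x))"

text \<open>The class is consistent: the complex numbers form a complex Hilbert space.\<close>
instantiation complex :: chilbert
begin
definition scaleC_complex :: "complex \<Rightarrow> complex \<Rightarrow> complex" where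
  "scaleC_complex a x = a * x"
definition cinner_complex :: "complex \<Rightarrow> complex \<Rightarrow> complex" where
  "cinner_complex x y = x * cnj y"
instance
proof
  fix a b x y z :: complex and r :: real
  show "scaleC a (x + y) = scaleC a x + scaleC a y" by (simp add: scaleC_complex_def algebra_simps)
  show "scaleC (a + b) x = scaleC a x + scaleC b x" by (simp add: scaleC_complex_def algebra_simps)
  show "scaleC a (scaleC b x) = scaleC (a * b) x" by (simp add: scaleC_complex_def algebra_simps)
  show "scaleC 1 x = x" by (simp add: scaleC_complex_def)
  show "r *\<^sub>R x = scaleC (complex_of_real r) x" by (simp add: scaleC_complex_def scaleR_conv_of_real)
  show "cinner (x + y) z = cinner x z + cinner y z" by (simp add: cinner_complex_def algebra_simps)
  show "cinner (scaleC a x) y = a * cinner x y" by (simp add: cinner_complex_def scaleC_complex_def)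
  show "cinner x y = cnj (cinner y x)" by (simp add: cinner_complex_def)
  show "norm x = sqrt (Re (cinner x x))"
    by (simp add: cinner_complex_def complex_mult_cnj cmod_def)
qed
end

definition bounded_clinear_op :: "('a::chilbert \<Rightarrow> 'a) \<Rightarrow> bool" where
  "bounded_clinear_op A \<longleftrightarrow>
     (\<forall>x y. A (x + y) = A x + A y) \<and>
     (\<forall>c x. A (scaleC c x) = scaleC c (A x)) \<and>
     (\<exists>K. \<forall>x. norm (A x) \<le> K * norm x)"

text \<open>The Hilbert-space adjoint (exists uniquely for bounded operators by Riesz).\<close>
definition adjoint_op :: "('a::chilbert \<Rightarrow> 'a) \<Rightarrow> ('a \<Rightarrow> 'a)" where
  "adjoint_op A = (SOME B. \<forall>x y. cinner (A x) y = cinner x (B y))"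

definition exp_op :: "real \<Rightarrow> ('a::chilbert \<Rightarrow> 'a) \<Rightarrow> 'a \<Rightarrow> 'a" where
  "exp_op t B g = (\<Sum>n. (t ^ n / fact n) *\<^sub>R (B ^^ n) g)"

definition bessel_family :: "'i set \<Rightarrow> ('i \<Rightarrow> 'a::chilbert) \<Rightarrow> bool" where
  "bessel_family I f \<longleftrightarrow> (\<exists>C. \<forall>x.
      (\<lambda>i. (cmod (cinner x (f i)))\<^sup>2) summable_on I \<and>
      (\<Sum>\<^sub>\<infinity>i\<in>I. (cmod (cinner x (f i)))\<^sup>2) \<le> C * (norm x)\<^sup>2)"

definition frame_family :: "'i set \<Rightarrow> ('i \<Rightarrow> 'a::chilbert) \<Rightarrow> bool" where
  "frame_family I f \<longleftrightarrow> bessel_family I f \<and> (\<exists>c>0. \<forall>x.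
      c * (norm x)\<^sup>2 \<le> (\<Sum>\<^sub>\<infinity>i\<in>I. (cmod (cinner x (f i)))\<^sup>2))"

definition semicont_frame :: "('a::chilbert \<Rightarrow> 'a) \<Rightarrow> 'a set \<Rightarrow> real \<Rightarrow> bool" where
  "semicont_frame A G \<tau> \<longleftrightarrow> (\<exists>c1>0. \<exists>c2>0. \<forall>x.
      (\<forall>g\<in>G. (\<lambda>t. (cmod (cinner x (exp_op t (adjoint_op A) g)))\<^sup>2) integrable_on {0..<\<tau>}) \<and>
      (\<lambda>g. integral {0..<\<tau>} (\<lambda>t. (cmod (cinner x (exp_op t (adjoint_op A) g)))\<^sup>2)) summable_on G \<and>
      c1 * (norm x)\<^sup>2 \<le> (\<Sum>\<^sub>\<infinity>g\<in>G. integral {0..<\<tau>} (\<lambda>t. (cmod (cinner x (exp_op t (adjoint_op A) g)))\<^sup>2)) \<and>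
      (\<Sum>\<^sub>\<infinity>g\<in>G. integral {0..<\<tau>} (\<lambda>t. (cmod (cinner x (exp_op t (adjoint_op A) g)))\<^sup>2)) \<le> c2 * (norm x)\<^sup>2)"

definition admissible_times :: "real \<Rightarrow> real list \<Rightarrow> bool" where
  "admissible_times \<tau> ts \<longleftrightarrow> ts \<noteq> [] \<and> sorted_wrt (<) ts \<and> hd ts = 0 \<and> last ts \<le> \<tau>"

definition mesh_less :: "real \<Rightarrow> real \<Rightarrow> real list \<Rightarrow> bool" where
  "mesh_less \<tau> \<delta> ts \<longleftrightarrow> (\<forall>i<length ts. \<bar>(ts @ [\<tau>]) ! (i + 1) - ts ! i\<bar> < \<delta>)"

end

theory Submission
  imports Defs
begin


subclass (in chilbert) banach ..

lemma scaleC_zero_left[simp]: "scaleC 0 (x::'a::chilbert) = 0"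
proof -
  have "scaleC 0 x = scaleC 0 x + scaleC 0 x" by (metis add_0 scaleC_add_left)
  then show ?thesis by simp
qed

lemma scaleC_real: "scaleC (complex_of_real r) (x::'a::chilbert) = r *\<^sub>R x"
  by (simp add: scaleR_scaleC)

lemma scaleC_zero_right[simp]: "scaleC c (0::'a::chilbert) = 0"
proof -
  have "scaleC c (0::'a) = scaleC c 0 + scaleC c 0" by (metis add_0 scaleC_add_right)
  then show ?thesis by simp
qed

lemma scaleC_minus_right: "scaleC c (- x::'a::chilbert) = - scaleC c x"
proof -
  have "scaleC c (- x) + scaleC c x = 0" by (simp add: scaleC_add_right[symmetric])
  then show ?thesis by (simp add: eq_neg_iff_add_eq_0)
qed

lemma scaleC_diff_right: "scaleC c (x - y::'a::chilbert) = scaleC c x - scaleC c y"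
  unfolding diff_conv_add_uminus by (simp only: scaleC_add_right scaleC_minus_right)

lemma scaleC_sum_right: "scaleC c (\<Sum>i\<in>F. f i) = (\<Sum>i\<in>F. scaleC c (f i::'a::chilbert))"
  by (induction F rule: infinite_finite_induct) (auto simp: scaleC_add_right)

lemma scaleC_scaleR_comm: "scaleC c (r *\<^sub>R x) = r *\<^sub>R scaleC c (x::'a::chilbert)"
  by (simp add: scaleR_scaleC scaleC_scaleC mult.commute)

lemma cinner_zero_left[simp]: "cinner (0::'a::chilbert) y = 0"
proof -
  have "cinner (0::'a) y = cinner 0 y + cinner 0 y" by (metis add_0 cinner_add_left)
  then show ?thesis by simp
qed

lemma cinner_zero_right[simp]: "cinner (x::'a::chilbert) 0 = 0"
  by (subst cinner_commute) simp

lemma cinner_add_right: "cinner (x::'a::chilbert) (y + z) = cinner x y + cinner x z"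
  by (subst (1 2 3) cinner_commute) (simp add: cinner_add_left)

lemma cinner_scaleC_right: "cinner (x::'a::chilbert) (scaleC a y) = cnj a * cinner x y"
  by (subst (1 2) cinner_commute) (simp add: cinner_scaleC_left)

lemma cinner_minus_left: "cinner (- x::'a::chilbert) y = - cinner x y"
proof -
  have "cinner (- x) y + cinner x y = 0" by (simp add: cinner_add_left[symmetric])
  then show ?thesis by (simp add: eq_neg_iff_add_eq_0)
qed

lemma cinner_minus_right: "cinner (x::'a::chilbert) (- y) = - cinner x y"
proof -
  have "cinner x (- y) + cinner x y = 0" by (simp add: cinner_add_right[symmetric])
  then show ?thesis by (simp add: eq_neg_iff_add_eq_0)
qed

lemma cinner_diff_left: "cinner (x - y::'a::chilbert) z = cinner x z - cinner y z"
  unfolding diff_conv_add_uminus by (simp only: cinner_add_left cinner_minus_left)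

lemma cinner_diff_right: "cinner (x::'a::chilbert) (y - z) = cinner x y - cinner x z"
  unfolding diff_conv_add_uminus by (simp only: cinner_add_right cinner_minus_right)

lemma cinner_sum_right: "cinner (x::'a::chilbert) (\<Sum>i\<in>F. f i) = (\<Sum>i\<in>F. cinner x (f i))"
  by (induction F rule: infinite_finite_induct) (auto simp: cinner_add_right)

lemma cinner_scaleR_left: "cinner (r *\<^sub>R x::'a::chilbert) y = complex_of_real r * cinner x y"
  by (simp add: scaleR_scaleC cinner_scaleC_left)

lemma cinner_scaleR_right: "cinner (x::'a::chilbert) (r *\<^sub>R y) = complex_of_real r * cinner x y"
  by (simp add: scaleR_scaleC cinner_scaleC_right)

lemma cinner_self_Im: "Im (cinner (x::'a::chilbert) x) = 0"
proof -
  have "cinner x x = cnj (cinner x x)" by (rule cinner_commute)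
  then have "Im (cinner x x) = Im (cnj (cinner x x))" by simp
  then show ?thesis by simp
qed

lemma cinner_self_Re: "Re (cinner (x::'a::chilbert) x) = (norm x)\<^sup>2"
proof -
  have "Re (cinner x x) \<ge> 0"
  proof (rule ccontr)
    assume "\<not> ?thesis"
    then have "sqrt (Re (cinner x x)) < 0" by simp
    then show False using norm_eq_sqrt_cinner[of x] by (metis norm_ge_zero not_le)
  qed
  then show ?thesis by (simp add: norm_eq_sqrt_cinner)
qed

lemma cinner_self: "cinner (x::'a::chilbert) x = complex_of_real ((norm x)\<^sup>2)"
  by (simp add: complex_eq_iff cinner_self_Im cinner_self_Re)

lemma cinner_self_eq_0: "cinner (x::'a::chilbert) x = 0 \<longleftrightarrow> x = 0"
  by (simp add: cinner_self)

lemma norm_scaleC: "norm (scaleC c (x::'a::chilbert)) = cmod c * norm x"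
proof -
  have "cinner (scaleC c x) (scaleC c x) = (c * cnj c) * cinner x x"
    by (simp add: cinner_scaleC_left cinner_scaleC_right mult.assoc)
  then have "complex_of_real ((norm (scaleC c x))\<^sup>2) = c * cnj c * complex_of_real ((norm x)\<^sup>2)"
    by (simp add: cinner_self)
  then have "(norm (scaleC c x))\<^sup>2 = (cmod c)\<^sup>2 * (norm x)\<^sup>2"
    by (simp add: complex_norm_square[symmetric] of_real_mult[symmetric] del: of_real_mult of_real_power)
  then have "(norm (scaleC c x))\<^sup>2 = (cmod c * norm x)\<^sup>2" by (simp add: power_mult_distrib)
  then show ?thesis by (rule power2_eq_imp_eq) auto
qed

lemma cauchy_schwarz: "cmod (cinner (x::'a::chilbert) y) \<le> norm x * norm y"
proof (cases "y = 0")
  case True then show ?thesis by simp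
next
  case False
  define c where "c = cinner x y"
  define n where "n = (norm y)\<^sup>2"
  have n: "n > 0" using False by (simp add: n_def)
  define l where "l = c / complex_of_real n"
  define z where "z = x - scaleC l y"
  have yx: "cinner y x = cnj c" by (simp add: c_def cinner_commute[of y x])
  have yy: "cinner y y = complex_of_real n" by (simp add: n_def cinner_self)
  have xx: "cinner x x = complex_of_real ((norm x)\<^sup>2)" by (simp add: cinner_self)
  have "cinner z z = cinner x x - cnj l * c - l * cnj c + l * cnj l * complex_of_real n"
    unfolding z_def
    by (simp add: cinner_diff_left cinner_diff_right cinner_scaleC_left cinner_scaleC_right
        yx yy c_def algebra_simps)
  also have "\<dots> = complex_of_real ((norm x)\<^sup>2 - (cmod c)\<^sup>2 / n)"
  proof -
    have cc: "c * cnj c = complex_of_real ((cmod c)\<^sup>2)" by (rule complex_norm_square[symmetric])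
    have n0: "complex_of_real n \<noteq> 0" using n by simp
    have 1: "cnj l * c = complex_of_real ((cmod c)\<^sup>2 / n)"
      unfolding l_def using n0 cc by (simp add: field_simps)
    have 2: "l * cnj c = complex_of_real ((cmod c)\<^sup>2 / n)"
      unfolding l_def using n0 cc by (simp add: field_simps)
    have 3: "l * cnj l * complex_of_real n = complex_of_real ((cmod c)\<^sup>2 / n)"
      unfolding l_def using n0 cc by (simp add: field_simps power2_eq_square)
    show ?thesis unfolding xx 1 2 3 by simp
  qed
  finally have "complex_of_real ((norm z)\<^sup>2) = complex_of_real ((norm x)\<^sup>2 - (cmod c)\<^sup>2 / n)"
    by (simp add: cinner_self)
  then have "(cmod c)\<^sup>2 / n \<le> (norm x)\<^sup>2"
    by (metis diff_ge_0_iff_ge of_real_eq_iff zero_le_power2)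
  then have "(cmod c)\<^sup>2 \<le> (norm x)\<^sup>2 * (norm y)\<^sup>2" using n by (simp add: n_def field_simps)
  then have "(cmod c)\<^sup>2 \<le> (norm x * norm y)\<^sup>2" by (simp add: power_mult_distrib)
  then show ?thesis unfolding c_def
    by (rule power2_le_imp_le) auto
qed


lemma norm_add_sq: "(norm (x + y::'a::chilbert))\<^sup>2 = (norm x)\<^sup>2 + (norm y)\<^sup>2 + 2 * Re (cinner x y)"
proof -
  have "Re (cinner y x) = Re (cinner x y)" by (subst cinner_commute) simp
  then show ?thesis
    by (simp add: cinner_self_Re[symmetric] cinner_add_left cinner_add_right)
qed

lemma norm_diff_sq: "(norm (x - y::'a::chilbert))\<^sup>2 = (norm x)\<^sup>2 + (norm y)\<^sup>2 - 2 * Re (cinner x y)"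
proof -
  have "Re (cinner y x) = Re (cinner x y)" by (subst cinner_commute) simp
  then show ?thesis
    by (simp add: cinner_self_Re[symmetric] cinner_diff_left cinner_diff_right)
qed

lemma riesz_real:
  fixes f :: "'a::chilbert \<Rightarrow> real"
  assumes add: "\<And>x y. f (x + y) = f x + f y"
    and sc: "\<And>r x. f (r *\<^sub>R x) = r * f x"
    and bd: "\<And>x. \<bar>f x\<bar> \<le> K * norm x"
  shows "\<exists>z. \<forall>h. f h = Re (cinner z h)"
proof -
  have blf: "bounded_linear f"
    by (rule bounded_linear_intro[of _ K]) (use add sc bd in \<open>auto simp: abs_le_iff mult.commute\<close>)
  define J where "J x = (norm x)\<^sup>2 / 2 - f x" for x
  have Jlow: "J x \<ge> - (K\<^sup>2) / 2" for x
  proof -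
    have "f x \<le> K * norm x" using bd[of x] by simp
    moreover have "K * norm x \<le> (norm x)\<^sup>2 / 2 + K\<^sup>2 / 2"
    proof -
      have "0 \<le> (norm x - K)\<^sup>2" by simp
      moreover have "(norm x - K)\<^sup>2 = (norm x)\<^sup>2 - 2 * K * norm x + K\<^sup>2"
        by (simp add: power2_diff algebra_simps)
      ultimately show ?thesis by linarith
    qed
    ultimately show ?thesis unfolding J_def by simp
  qed
  define I where "I = Inf (range J)"
  have bddb: "bdd_below (range J)" using Jlow by (intro bdd_belowI[of _ "- (K\<^sup>2) / 2"]) auto
  have IJ: "I \<le> J x" for x unfolding I_def using bddb by (simp add: cInf_lower)
  have "\<exists>x. J x < I + 1 / (Suc n)" for n
  proof -
    have "Inf (range J) < I + 1 / Suc n" unfolding I_def by simp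
    then obtain v where "v \<in> range J" "v < I + 1 / Suc n"
      using cInf_lessD[of "range J"] by blast
    then show ?thesis by auto
  qed
  then obtain xs where xs: "\<And>n. J (xs n) < I + 1 / Suc n" by metis
  have par: "J x + J y = 2 * J ((1/2) *\<^sub>R (x + y)) + (norm (x - y))\<^sup>2 / 4" for x y
  proof -
    have "f x + f y = 2 * f ((1/2) *\<^sub>R (x + y))" by (simp add: sc add)
    moreover have "(norm ((1/2) *\<^sub>R (x + y)))\<^sup>2 = (norm (x + y))\<^sup>2 / 4"
      by (simp add: power2_eq_square)
    ultimately show ?thesis unfolding J_def using norm_add_sq[of x y] norm_diff_sq[of x y]
      by (simp add: field_simps)
  qed
  have close: "(norm (xs m - xs n))\<^sup>2 \<le> 4 * (1 / Suc m + 1 / Suc n)" for m n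
  proof -
    have "J (xs m) + J (xs n) \<ge> 2 * I + (norm (xs m - xs n))\<^sup>2 / 4"
      using par[of "xs m" "xs n"] IJ[of "(1/2) *\<^sub>R (xs m + xs n)"] by linarith
    then have "(norm (xs m - xs n))\<^sup>2 / 4 < 1 / Suc m + 1 / Suc n" using xs[of m] xs[of n] by linarith
    then show ?thesis by simp
  qed
  have "Cauchy xs"
  proof (rule metric_CauchyI)
    fix e :: real assume e: "e > 0"
    obtain N :: nat where N: "8 / e\<^sup>2 < N" using reals_Archimedean2 by blast
    have "dist (xs m) (xs n) < e" if "m \<ge> N" "n \<ge> N" for m n
    proof -
      have e2: "e\<^sup>2 > 0" using e by simp
      have "1 / real (Suc m) \<le> 1 / Suc N" using that by (simp add: frac_le)
      moreover have "1 / real (Suc n) \<le> 1 / Suc N" using that by (simp add: frac_le)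
      moreover have "8 / Suc N < e\<^sup>2"
      proof -
        have "8 < real N * e\<^sup>2" using N e2 by (simp add: field_simps)
        also have "\<dots> \<le> real (Suc N) * e\<^sup>2" using e2 by (intro mult_right_mono) auto
        finally show ?thesis by (simp add: divide_less_eq mult.commute)
      qed
      ultimately have sq: "(norm (xs m - xs n))\<^sup>2 < e\<^sup>2" using close[of m n] by simp
      have "norm (xs m - xs n) < e" using power_less_imp_less_base[OF sq] e by simp
      then show ?thesis unfolding dist_norm .
    qed
    then show "\<exists>M. \<forall>m\<ge>M. \<forall>n\<ge>M. dist (xs m) (xs n) < e" by blast
  qed
  then obtain z where z: "xs \<longlonglongrightarrow> z" using convergent_def Cauchy_convergent_iff by blast
  have Jcont: "(\<lambda>n. J (xs n)) \<longlonglongrightarrow> J z"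
  proof -
    have 1: "(\<lambda>n. f (xs n)) \<longlonglongrightarrow> f z" by (rule bounded_linear.tendsto[OF blf z])
    have 2: "(\<lambda>n. norm (xs n)) \<longlonglongrightarrow> norm z" by (rule tendsto_norm[OF z])
    show ?thesis unfolding J_def by (intro tendsto_intros 1 2 z) simp
  qed
  have Jup: "(\<lambda>n. J (xs n)) \<longlonglongrightarrow> I"
  proof (rule tendsto_sandwich[of "\<lambda>n. I" _ _ "\<lambda>n. I + 1 / Suc n"])
    show "\<forall>\<^sub>F n in sequentially. I \<le> J (xs n)" using IJ by simp
    show "\<forall>\<^sub>F n in sequentially. J (xs n) \<le> I + 1 / real (Suc n)" using xs by (simp add: less_imp_le)
    show "(\<lambda>n. I) \<longlonglongrightarrow> I" by simp
    show "(\<lambda>n. I + 1 / real (Suc n)) \<longlonglongrightarrow> I"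
      using tendsto_add[OF tendsto_const[of I] LIMSEQ_inverse_real_of_nat] by (simp add: inverse_eq_divide)
  qed
  have Jz: "J z = I" using LIMSEQ_unique[OF Jcont Jup] .
  show ?thesis
  proof (intro exI allI)
    fix h
    define a where "a = Re (cinner z h) - f h"
    define b where "b = (norm h)\<^sup>2 / 2"
    have b: "b \<ge> 0" unfolding b_def by simp
    have t: "t * a + t\<^sup>2 * b \<ge> 0" for t
    proof -
      have "J z \<le> J (z + t *\<^sub>R h)" using IJ Jz by simp
      moreover have "(norm (z + t *\<^sub>R h))\<^sup>2 = (norm z)\<^sup>2 + t\<^sup>2 * (norm h)\<^sup>2 + 2 * t * Re (cinner z h)"
        using norm_add_sq[of z "t *\<^sub>R h"] by (simp add: cinner_scaleR_right power_mult_distrib)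
      moreover have "f (z + t *\<^sub>R h) = f z + t * f h" by (simp add: add sc)
      ultimately show ?thesis unfolding J_def a_def b_def by (simp add: algebra_simps)
    qed
    define D where "D = 2 * b + 1"
    have D: "D > 0" unfolding D_def using b by simp
    define t where "t = - a / D"
    have Dt: "D * t = - a" unfolding t_def using D by simp
    have "D\<^sup>2 * (t * a + t\<^sup>2 * b) = (D * t) * D * a + (D * t)\<^sup>2 * b"
      by (simp add: algebra_simps power2_eq_square)
    also have "\<dots> = (- a) * D * a + (- a)\<^sup>2 * b" by (simp only: Dt)
    also have "\<dots> = - (a\<^sup>2 * (b + 1))" unfolding D_def by (simp add: algebra_simps power2_eq_square)
    finally have eq: "D\<^sup>2 * (t * a + t\<^sup>2 * b) = - (a\<^sup>2 * (b + 1))" .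
    have "0 \<le> D\<^sup>2 * (t * a + t\<^sup>2 * b)" using t[of t] by simp
    then have "a\<^sup>2 * (b + 1) \<le> 0" using eq by linarith
    moreover have "a\<^sup>2 \<le> a\<^sup>2 * (b + 1)" using b by (simp add: algebra_simps)
    ultimately have "a\<^sup>2 \<le> 0" by linarith
    then have "a = 0" by simp
    then show "f h = Re (cinner z h)" unfolding a_def by simp
  qed
qed

lemma riesz:
  fixes \<phi> :: "'a::chilbert \<Rightarrow> complex"
  assumes add: "\<And>x y. \<phi> (x + y) = \<phi> x + \<phi> y"
    and sc: "\<And>c x. \<phi> (scaleC c x) = c * \<phi> x"
    and bd: "\<And>x. cmod (\<phi> x) \<le> K * norm x"
  shows "\<exists>z. \<forall>x. \<phi> x = cinner x z"
proof -
  have "\<exists>z. \<forall>h. Re (\<phi> h) = Re (cinner z h)"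
  proof (rule riesz_real[of _ K])
    show "Re (\<phi> (x + y)) = Re (\<phi> x) + Re (\<phi> y)" for x y by (simp add: add)
    show "Re (\<phi> (r *\<^sub>R x)) = r * Re (\<phi> x)" for r x by (simp add: scaleR_scaleC sc)
    show "\<bar>Re (\<phi> x)\<bar> \<le> K * norm x" for x using bd[of x] abs_Re_le_cmod[of "\<phi> x"] by linarith
  qed
  then obtain z where z: "\<And>h. Re (\<phi> h) = Re (cinner z h)" by blast
  have zr: "Re (\<phi> h) = Re (cinner h z)" for h
    using z[of h] by (subst cinner_commute) simp
  show ?thesis
  proof (intro exI allI)
    fix x
    have "Im (\<phi> x) = Re (\<phi> (scaleC (- \<i>) x))" by (simp add: sc)
    also have "\<dots> = Re (cinner (scaleC (- \<i>) x) z)" by (rule zr)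
    also have "\<dots> = Im (cinner x z)" by (simp add: cinner_scaleC_left)
    finally show "\<phi> x = cinner x z" using zr[of x] by (simp add: complex_eq_iff)
  qed
qed

lemma adjoint_exists:
  fixes A :: "'a::chilbert \<Rightarrow> 'a"
  assumes "bounded_clinear_op A"
  shows "\<forall>x y. cinner (A x) y = cinner x (adjoint_op A y)"
proof -
  obtain K where K: "\<And>x. norm (A x) \<le> K * norm x"
    and add: "\<And>x y. A (x + y) = A x + A y" and sc: "\<And>c x. A (scaleC c x) = scaleC c (A x)"
    using assms unfolding bounded_clinear_op_def by blast
  have "\<exists>z. \<forall>x. cinner (A x) y = cinner x z" for y
  proof (rule riesz[of _ "K * norm y"])
    show "cinner (A (x + x')) y = cinner (A x) y + cinner (A x') y" for x x'
      by (simp add: add cinner_add_left)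
    show "cinner (A (scaleC c x)) y = c * cinner (A x) y" for c x
      by (simp add: sc cinner_scaleC_left)
    show "cmod (cinner (A x) y) \<le> K * norm y * norm x" for x
    proof -
      have "cmod (cinner (A x) y) \<le> norm (A x) * norm y" by (rule cauchy_schwarz)
      also have "\<dots> \<le> K * norm x * norm y" using K[of x] by (simp add: mult_right_mono)
      finally show ?thesis by (simp add: algebra_simps)
    qed
  qed
  then have "\<exists>B. \<forall>x y. cinner (A x) y = cinner x (B y)" by metis
  then show ?thesis unfolding adjoint_op_def by (rule someI_ex)
qed

lemma cinner_ext: "(\<And>x. cinner x u = cinner x v) \<Longrightarrow> u = (v::'a::chilbert)"
  by (metis cinner_diff_right cinner_self_eq_0 eq_iff_diff_eq_0)

lemma adjoint_props:
  fixes A :: "'a::chilbert \<Rightarrow> 'a"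
  assumes "bounded_clinear_op A"
  shows "bounded_clinear_op (adjoint_op A)"
proof -
  define B where "B = adjoint_op A"
  have adj: "\<And>x y. cinner (A x) y = cinner x (B y)" using adjoint_exists[OF assms] B_def by simp
  obtain K0 where K0: "\<And>x. norm (A x) \<le> K0 * norm x"
    using assms unfolding bounded_clinear_op_def by blast
  define K where "K = \<bar>K0\<bar>"
  have K: "norm (A x) \<le> K * norm x" for x
    using K0[of x] unfolding K_def by (meson abs_ge_self mult_right_mono norm_ge_zero order_trans)
  have Kp: "K \<ge> 0" unfolding K_def by simp
  have "B (x + y) = B x + B y" for x y
    by (rule cinner_ext) (simp add: adj[symmetric] cinner_add_right)
  moreover have "B (scaleC c x) = scaleC c (B x)" for c x
    by (rule cinner_ext) (simp add: adj[symmetric] cinner_scaleC_right)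
  moreover have "norm (B y) \<le> K * norm y" for y
  proof -
    have "(norm (B y))\<^sup>2 = Re (cinner (A (B y)) y)" by (simp add: adj cinner_self_Re)
    also have "\<dots> \<le> cmod (cinner (A (B y)) y)" by (rule complex_Re_le_cmod)
    also have "\<dots> \<le> norm (A (B y)) * norm y" by (rule cauchy_schwarz)
    also have "\<dots> \<le> K * norm (B y) * norm y" using K by (simp add: mult_right_mono)
    finally have "norm (B y) * norm (B y) \<le> (K * norm y) * norm (B y)"
      by (simp add: power2_eq_square algebra_simps)
    then show ?thesis
      by (cases "norm (B y) = 0") (auto simp: mult_le_cancel_right Kp)
  qed
  ultimately show ?thesis unfolding B_def[symmetric] bounded_clinear_op_def by blast
qed


lemma exp_sums_real: "(\<lambda>n. x ^ n / fact n) sums exp (x::real)"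
  using exp_converges[of x] by (simp add: divide_inverse mult.commute)

locale bop =
  fixes B :: "'a::chilbert \<Rightarrow> 'a" and K :: real
  assumes Badd: "\<And>x y. B (x + y) = B x + B y"
    and BscC: "\<And>c x. B (scaleC c x) = scaleC c (B x)"
    and Bbd: "\<And>x. norm (B x) \<le> K * norm x"
    and Kpos: "K \<ge> 0"
begin

lemma Bpow_add: "(B ^^ n) (x + y) = (B ^^ n) x + (B ^^ n) y"
  by (induction n) (auto simp: Badd)

lemma Bpow_scaleC: "(B ^^ n) (scaleC c x) = scaleC c ((B ^^ n) x)"
  by (induction n) (auto simp: BscC)

lemma Bpow_bd: "norm ((B ^^ n) x) \<le> K ^ n * norm x"
proof (induction n)
  case 0 then show ?case by simp
next
  case (Suc n)
  have "norm ((B ^^ Suc n) x) \<le> K * norm ((B ^^ n) x)" using Bbd by simp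
  also have "\<dots> \<le> K * (K ^ n * norm x)" using Suc Kpos by (simp add: mult_left_mono)
  finally show ?case by simp
qed

definition E :: "real \<Rightarrow> 'a \<Rightarrow> 'a" where "E t v = exp_op t B v"

lemma term_bd: "norm ((t ^ n / fact n) *\<^sub>R (B ^^ n) v) \<le> (\<bar>t\<bar> * K) ^ n / fact n * norm v"
proof -
  have "norm ((t ^ n / fact n) *\<^sub>R (B ^^ n) v) = \<bar>t\<bar> ^ n / fact n * norm ((B ^^ n) v)"
    by (simp add: power_abs)
  also have "\<dots> \<le> \<bar>t\<bar> ^ n / fact n * (K ^ n * norm v)"
    by (intro mult_left_mono Bpow_bd) auto
  finally show ?thesis by (simp add: power_mult_distrib)
qed

lemma summable_maj: "summable (\<lambda>n. (\<bar>t\<bar> * K) ^ n / fact n * norm v)"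
  using summable_mult2[OF sums_summable[OF exp_sums_real]] by blast

lemma summable_term: "summable (\<lambda>n. (t ^ n / fact n) *\<^sub>R (B ^^ n) v)"
  by (rule summable_comparison_test'[where N=0, OF summable_maj[of t v]]) (rule term_bd)

lemma E_bd: "norm (E t v) \<le> exp (\<bar>t\<bar> * K) * norm v"
proof -
  have "norm (E t v) \<le> (\<Sum>n. (\<bar>t\<bar> * K) ^ n / fact n * norm v)"
    unfolding E_def exp_op_def by (rule norm_suminf_le) (rule term_bd, rule summable_maj)
  also have "\<dots> = exp (\<bar>t\<bar> * K) * norm v"
  proof -
    have "(\<lambda>n. (\<bar>t\<bar> * K) ^ n / fact n * norm v) sums (exp (\<bar>t\<bar> * K) * norm v)"
      by (rule sums_mult2[OF exp_sums_real])
    then show ?thesis by (rule sums_unique[symmetric])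
  qed
  finally show ?thesis .
qed

lemma E_add: "E t (x + y) = E t x + E t y"
  unfolding E_def exp_op_def
  by (simp add: Bpow_add scaleR_add_right suminf_add[OF summable_term summable_term])

lemma blin_scaleC: "bounded_linear (scaleC c :: 'a \<Rightarrow> 'a)"
  by (rule bounded_linear_intro[of _ "cmod c"])
     (auto simp: scaleC_add_right scaleC_scaleR_comm norm_scaleC)

lemma E_scaleC: "E t (scaleC c x) = scaleC c (E t x)"
  unfolding E_def exp_op_def
  by (simp add: Bpow_scaleC scaleC_scaleR_comm[symmetric]
      bounded_linear.suminf[OF blin_scaleC summable_term])

lemma E_diff_bd:
  assumes R: "R > 0" and t: "\<bar>t\<bar> \<le> R" and s: "\<bar>s\<bar> \<le> R"
  shows "norm (E t v - E s v) \<le> \<bar>t - s\<bar> * (exp (2 * R * K) / R) * norm v"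
proof -
  have pd: "\<bar>t ^ n - s ^ n\<bar> \<le> n * R ^ n * (\<bar>t - s\<bar> / R)" for n
  proof -
    have "norm ((t/R) ^ n - (s/R) ^ n) \<le> n * norm (t/R - s/R)"
      by (rule norm_power_diff) (use R t s in \<open>auto simp: abs_le_iff field_simps\<close>)
    then have "\<bar>t ^ n - s ^ n\<bar> / R ^ n \<le> n * (\<bar>t - s\<bar> / R)"
      using R by (simp add: power_divide diff_divide_distrib[symmetric] abs_divide)
    then show ?thesis using R by (simp add: field_simps)
  qed
  define g where "g n = \<bar>t - s\<bar> * norm v / R * ((2 * R * K) ^ n / fact n)" for n
  have gs: "summable g" unfolding g_def
    by (rule summable_mult[OF sums_summable[OF exp_sums_real]])
  have "g sums (\<bar>t - s\<bar> * norm v / R * exp (2 * R * K))"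
    unfolding g_def by (rule sums_mult) (rule exp_sums_real)
  then have gsum: "suminf g = \<bar>t - s\<bar> * (exp (2 * R * K) / R) * norm v"
    by (simp add: sums_unique[symmetric] field_simps)
  have "E t v - E s v = (\<Sum>n. (t ^ n / fact n) *\<^sub>R (B ^^ n) v - (s ^ n / fact n) *\<^sub>R (B ^^ n) v)"
    unfolding E_def exp_op_def using suminf_diff[OF summable_term[of t v] summable_term[of s v]] by simp
  also have "norm \<dots> \<le> suminf g"
  proof (rule norm_suminf_le[OF _ gs])
    fix n
    have "norm ((t ^ n / fact n) *\<^sub>R (B ^^ n) v - (s ^ n / fact n) *\<^sub>R (B ^^ n) v)
        = \<bar>t ^ n - s ^ n\<bar> / fact n * norm ((B ^^ n) v)"
      by (simp add: scaleR_diff_left[symmetric] diff_divide_distrib[symmetric] abs_divide)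
    also have "\<dots> \<le> (n * R ^ n * (\<bar>t - s\<bar> / R)) / fact n * (K ^ n * norm v)"
      using R by (intro mult_mono divide_right_mono pd Bpow_bd) (auto intro!: divide_nonneg_nonneg mult_nonneg_nonneg)
    also have "\<dots> \<le> (2 ^ n * R ^ n * (\<bar>t - s\<bar> / R)) / fact n * (K ^ n * norm v)"
    proof -
      have "real n \<le> 2 ^ n" using less_exp[of n] by (metis of_nat_le_iff of_nat_numeral of_nat_power less_imp_le)
      then show ?thesis using R Kpos
        by (intro mult_right_mono divide_right_mono) auto
    qed
    also have "\<dots> = g n" unfolding g_def by (simp add: power_mult_distrib field_simps)
    finally show "norm ((t ^ n / fact n) *\<^sub>R (B ^^ n) v - (s ^ n / fact n) *\<^sub>R (B ^^ n) v) \<le> g n" .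
  qed
  finally show ?thesis using gsum by simp
qed

end


lemma sum_sq_CS:
  "(\<Sum>i\<in>F. u i * v i)\<^sup>2 \<le> (\<Sum>i\<in>F. (u i)\<^sup>2) * (\<Sum>i\<in>F. (v i)\<^sup>2)"
  if "\<And>i. u i \<ge> 0" "\<And>i. v i \<ge> (0::real)"
proof -
  have "(\<Sum>i\<in>F. u i * v i) \<le> L2_set u F * L2_set v F"
    using L2_set_mult_ineq[of u v F] that by simp
  moreover have "0 \<le> (\<Sum>i\<in>F. u i * v i)" using that by (simp add: sum_nonneg)
  ultimately have "(\<Sum>i\<in>F. u i * v i)\<^sup>2 \<le> (L2_set u F * L2_set v F)\<^sup>2"
    by (simp add: power_mono)
  also have "\<dots> = (\<Sum>i\<in>F. (u i)\<^sup>2) * (\<Sum>i\<in>F. (v i)\<^sup>2)"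
    unfolding L2_set_def power_mult_distrib by (simp add: sum_nonneg)
  finally show ?thesis .
qed

lemma bessel_fin:
  fixes M :: "'a::chilbert \<Rightarrow> 'a"
  assumes bes: "\<And>y F. finite F \<Longrightarrow> F \<subseteq> G \<Longrightarrow> (\<Sum>g\<in>F. (cmod (cinner y g))\<^sup>2) \<le> C * (norm y)\<^sup>2"
    and Madd: "\<And>u v. M (u + v) = M u + M v"
    and Msc: "\<And>c u. M (scaleC c u) = scaleC c (M u)"
    and Mbd: "\<And>u. norm (M u) \<le> m * norm u"
    and C: "C \<ge> 0" and m: "m \<ge> 0"
    and F: "finite F" "F \<subseteq> G"
  shows "(\<Sum>g\<in>F. (cmod (cinner x (M g)))\<^sup>2) \<le> C * m\<^sup>2 * (norm x)\<^sup>2"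
proof -
  define a where "a g = cinner x (M g)" for g
  define S where "S = (\<Sum>g\<in>F. (cmod (a g))\<^sup>2)"
  have S0: "S \<ge> 0" unfolding S_def by (simp add: sum_nonneg)
  define y where "y = (\<Sum>g\<in>F. scaleC (a g) g)"
  have M0: "M 0 = 0" using Madd[of 0 0] by simp
  have Msum: "M (\<Sum>g\<in>H. h g) = (\<Sum>g\<in>H. M (h g))" for H h
    by (induction H rule: infinite_finite_induct) (auto simp: M0 Madd)
  have "cinner x (M y) = (\<Sum>g\<in>F. cnj (a g) * a g)"
    unfolding y_def Msum by (simp add: Msc cinner_sum_right cinner_scaleC_right a_def)
  also have "\<dots> = complex_of_real S"
    unfolding S_def of_real_sum by (rule sum.cong) (simp_all add: complex_norm_square[symmetric] mult.commute)
  finally have xMy: "cinner x (M y) = complex_of_real S" .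
  have "S = cmod (cinner x (M y))" using xMy S0 by simp
  also have "\<dots> \<le> norm x * norm (M y)" by (rule cauchy_schwarz)
  also have "\<dots> \<le> norm x * (m * norm y)" by (simp add: Mbd mult_left_mono)
  finally have S1: "S \<le> norm x * m * norm y" by (simp add: mult.assoc)
  have yy: "(norm y)\<^sup>2 \<le> S * C"
  proof -
    have "cinner y y = (\<Sum>g\<in>F. cnj (a g) * cinner y g)"
      by (subst (2) y_def) (simp add: cinner_sum_right cinner_scaleC_right)
    then have "(norm y)\<^sup>2 = Re (\<Sum>g\<in>F. cnj (a g) * cinner y g)" by (metis cinner_self_Re)
    also have "\<dots> \<le> cmod (\<Sum>g\<in>F. cnj (a g) * cinner y g)" by (rule complex_Re_le_cmod)
    also have "\<dots> \<le> (\<Sum>g\<in>F. cmod (a g) * cmod (cinner y g))"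
      by (rule order_trans[OF norm_sum]) (simp add: norm_mult)
    finally have n1: "(norm y)\<^sup>2 \<le> (\<Sum>g\<in>F. cmod (a g) * cmod (cinner y g))" .
    have "((norm y)\<^sup>2)\<^sup>2 \<le> (\<Sum>g\<in>F. cmod (a g) * cmod (cinner y g))\<^sup>2"
      using n1 by (intro power_mono) simp_all
    also have "\<dots> \<le> S * (\<Sum>g\<in>F. (cmod (cinner y g))\<^sup>2)"
      unfolding S_def by (rule sum_sq_CS) auto
    also have "\<dots> \<le> S * (C * (norm y)\<^sup>2)" using bes[OF F] S0 by (simp add: mult_left_mono)
    finally have "(norm y)\<^sup>2 * (norm y)\<^sup>2 \<le> (S * C) * (norm y)\<^sup>2"
      by (simp add: power2_eq_square algebra_simps)
    then show ?thesis
    proof (cases "norm y = 0")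
      case True then show ?thesis using S0 C by simp
    next
      case False
      then have "(norm y)\<^sup>2 > 0" by simp
      then show ?thesis using \<open>(norm y)\<^sup>2 * (norm y)\<^sup>2 \<le> (S * C) * (norm y)\<^sup>2\<close>
        by (simp only: mult_le_cancel_right_pos)
    qed
  qed
  have "S * S \<le> (norm x * m)\<^sup>2 * (norm y)\<^sup>2"
  proof -
    have "S * S \<le> (norm x * m * norm y) * (norm x * m * norm y)"
      using S1 S0 by (intro mult_mono) auto
    then show ?thesis by (simp add: power2_eq_square algebra_simps)
  qed
  also have "\<dots> \<le> (norm x * m)\<^sup>2 * (S * C)" using yy by (simp add: mult_left_mono)
  finally have "S * S \<le> (C * m\<^sup>2 * (norm x)\<^sup>2) * S" by (simp add: power2_eq_square algebra_simps)
  then have "S \<le> C * m\<^sup>2 * (norm x)\<^sup>2"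
  proof (cases "S = 0")
    case True then show ?thesis using C by simp
  next
    case False
    then have "S > 0" using S0 by simp
    then show ?thesis using \<open>S * S \<le> (C * m\<^sup>2 * (norm x)\<^sup>2) * S\<close>
      by (simp only: mult_le_cancel_right_pos)
  qed
  then show ?thesis unfolding S_def a_def .
qed

lemma sq_diff_bound: "(cmod a)\<^sup>2 \<le> 2 * (cmod b)\<^sup>2 + 2 * (cmod (a - b))\<^sup>2"
proof -
  have "cmod a \<le> cmod b + cmod (a - b)" by (metis add.commute diff_add_cancel norm_triangle_ineq)
  then have "(cmod a)\<^sup>2 \<le> (cmod b + cmod (a - b))\<^sup>2" by (simp add: power_mono)
  also have "\<dots> \<le> 2 * (cmod b)\<^sup>2 + 2 * (cmod (a - b))\<^sup>2"
  proof -
    have "0 \<le> (cmod b - cmod (a - b))\<^sup>2" by simp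
    then show ?thesis by (simp add: power2_diff power2_sum algebra_simps)
  qed
  finally show ?thesis .
qed


locale mc = bop B K for B :: "'a::chilbert \<Rightarrow> 'a" and K +
  fixes G :: "'a set" and C \<tau> :: real
  assumes bes: "\<And>y F. finite F \<Longrightarrow> F \<subseteq> G \<Longrightarrow> (\<Sum>g\<in>F. (cmod (cinner y g))\<^sup>2) \<le> C * (norm y)\<^sup>2"
    and Cpos: "C \<ge> 0" and taupos: "\<tau> > 0"
begin

definition L where "L = exp (2 * \<tau> * K) / \<tau>"
definition Cb where "Cb = C * (exp (\<tau> * K))\<^sup>2"
definition f where "f x t g = (cmod (cinner x (E t g)))\<^sup>2"

lemma L_pos: "L > 0" unfolding L_def using taupos by simp
lemma Cb_nonneg: "Cb \<ge> 0" unfolding Cb_def using Cpos by simp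
lemma f_nonneg: "f x t g \<ge> 0" unfolding f_def by simp

lemma PW:
  assumes "\<bar>t\<bar> \<le> \<tau>" "\<bar>s\<bar> \<le> \<tau>" "finite F" "F \<subseteq> G"
  shows "(\<Sum>g\<in>F. f x t g) \<le> 2 * (\<Sum>g\<in>F. f x s g) + 2 * C * (\<bar>t - s\<bar> * L)\<^sup>2 * (norm x)\<^sup>2"
proof -
  have "(\<Sum>g\<in>F. f x t g) \<le> (\<Sum>g\<in>F. 2 * f x s g + 2 * (cmod (cinner x (E t g - E s g)))\<^sup>2)"
    unfolding f_def by (rule sum_mono) (metis sq_diff_bound cinner_diff_right)
  also have "\<dots> = 2 * (\<Sum>g\<in>F. f x s g) + 2 * (\<Sum>g\<in>F. (cmod (cinner x (E t g - E s g)))\<^sup>2)"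
    by (simp add: sum.distrib sum_distrib_left)
  also have "(\<Sum>g\<in>F. (cmod (cinner x (E t g - E s g)))\<^sup>2) \<le> C * (\<bar>t - s\<bar> * L)\<^sup>2 * (norm x)\<^sup>2"
  proof (rule bessel_fin[of G C "\<lambda>u. E t u - E s u", OF bes])
    show "E t (u + v) - E s (u + v) = (E t u - E s u) + (E t v - E s v)" for u v
      by (simp add: E_add)
    show "E t (scaleC c u) - E s (scaleC c u) = scaleC c (E t u - E s u)" for c u
      by (simp add: E_scaleC scaleC_diff_right)
    show "norm (E t u - E s u) \<le> \<bar>t - s\<bar> * L * norm u" for u
      using E_diff_bd[OF taupos assms(1,2)] unfolding L_def by simp
  qed (use assms Cpos L_pos in auto)
  finally show ?thesis by simp
qed

lemma UB:
  assumes "\<bar>t\<bar> \<le> \<tau>" "finite F" "F \<subseteq> G"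
  shows "(\<Sum>g\<in>F. f x t g) \<le> Cb * (norm x)\<^sup>2"
proof -
  have "(\<Sum>g\<in>F. f x t g) \<le> C * (exp (\<bar>t\<bar> * K))\<^sup>2 * (norm x)\<^sup>2"
    unfolding f_def
  proof (rule bessel_fin[of G C "E t", OF bes])
    show "norm (E t u) \<le> exp (\<bar>t\<bar> * K) * norm u" for u by (rule E_bd)
  qed (use assms Cpos in \<open>auto simp: E_add E_scaleC\<close>)
  also have "\<dots> \<le> Cb * (norm x)\<^sup>2" unfolding Cb_def
    using assms Kpos Cpos by (intro mult_right_mono mult_left_mono power_mono) (auto intro: mult_right_mono)
  finally show ?thesis .
qed

lemma f_cont: "continuous_on {0..\<tau>} (\<lambda>t. f x t g)"
proof -
  have "(norm x * L * norm g)-lipschitz_on {0..\<tau>} (\<lambda>t. cinner x (E t g))"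
  proof (rule lipschitz_onI)
    fix t s assume ts: "t \<in> {0..\<tau>}" "s \<in> {0..\<tau>}"
    have "dist (cinner x (E t g)) (cinner x (E s g)) = cmod (cinner x (E t g - E s g))"
      by (simp add: dist_norm cinner_diff_right)
    also have "\<dots> \<le> norm x * norm (E t g - E s g)" by (rule cauchy_schwarz)
    also have "\<dots> \<le> norm x * (\<bar>t - s\<bar> * L * norm g)"
      using E_diff_bd[OF taupos, of t s g] ts unfolding L_def by (intro mult_left_mono) auto
    finally show "dist (cinner x (E t g)) (cinner x (E s g)) \<le> norm x * L * norm g * dist t s"
      by (simp add: dist_real_def algebra_simps)
  qed (use L_pos in auto)
  then have "continuous_on {0..\<tau>} (\<lambda>t. cinner x (E t g))" by (rule lipschitz_on_continuous_on)
  then show ?thesis unfolding f_def by (intro continuous_intros)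
qed

lemma f_int: "(\<lambda>t. f x t g) integrable_on {0..\<tau>}"
  by (rule integrable_continuous_interval[OF f_cont])

lemma Ico_Icc: "{0..\<tau>} = insert \<tau> {0..<\<tau>}" using taupos by auto

lemma f_int_Ico: "(\<lambda>t. f x t g) integrable_on {0..<\<tau>}"
  using f_int integrable_on_insert_iff Ico_Icc by metis

lemma f_integral_Ico: "integral {0..<\<tau>} (\<lambda>t. f x t g) = integral {0..\<tau>} (\<lambda>t. f x t g)"
  by (rule integral_spike_set) (auto simp: Ico_Icc intro: negligible_subset[of "{\<tau>}"])

lemma int_nonneg: "integral {0..\<tau>} (\<lambda>t. f x t g) \<ge> 0"
  by (rule integral_nonneg[OF f_int]) (simp add: f_nonneg)

lemma int_sum: "(\<Sum>g\<in>F. integral {0..\<tau>} (\<lambda>t. f x t g)) = integral {0..\<tau>} (\<lambda>t. \<Sum>g\<in>F. f x t g)"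
proof (cases "finite F")
  case True then show ?thesis by (intro integral_sum[symmetric]) (auto intro: f_int)
qed simp

lemma sum_int_int: "(\<lambda>t. \<Sum>g\<in>F. f x t g) integrable_on {0..\<tau>}"
proof (cases "finite F")
  case True then show ?thesis by (intro integrable_sum) (auto intro: f_int)
qed (simp add: integrable_0)

lemma int_sum_UB:
  assumes "finite F" "F \<subseteq> G"
  shows "(\<Sum>g\<in>F. integral {0..\<tau>} (\<lambda>t. f x t g)) \<le> \<tau> * Cb * (norm x)\<^sup>2"
proof -
  have "integral {0..\<tau>} (\<lambda>t. \<Sum>g\<in>F. f x t g) \<le> integral {0..\<tau>} (\<lambda>t. Cb * (norm x)\<^sup>2)"
    by (rule integral_le[OF sum_int_int]) (use UB assms taupos in auto)
  then show ?thesis using taupos unfolding int_sum by (simp add: mult_ac)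
qed

lemma sumG_summable: "(\<lambda>g. integral {0..\<tau>} (\<lambda>t. f x t g)) summable_on G"
  by (rule nonneg_bdd_above_summable_on)
     (use int_nonneg int_sum_UB in \<open>auto intro!: bdd_aboveI[of _ "\<tau> * Cb * (norm x)\<^sup>2"]\<close>)

lemma sumG_UB: "(\<Sum>\<^sub>\<infinity>g\<in>G. integral {0..\<tau>} (\<lambda>t. f x t g)) \<le> \<tau> * Cb * (norm x)\<^sup>2"
  by (rule infsum_le_finite_sums[OF sumG_summable int_sum_UB])

end


lemma ts_range:
  assumes "admissible_times \<tau> ts" "s \<in> set ts"
  shows "0 \<le> s \<and> s \<le> \<tau>"
proof -
  from assms(1) have ne: "ts \<noteq> []" and so: "sorted_wrt (<) ts" and h: "hd ts = 0" and l: "last ts \<le> \<tau>"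
    unfolding admissible_times_def by auto
  obtain j where j: "j < length ts" "s = ts ! j" using assms(2) by (metis in_set_conv_nth)
  have "ts ! 0 \<le> ts ! j"
    using so j by (cases "j = 0") (auto simp: sorted_wrt_iff_nth_less less_imp_le)
  moreover have "ts ! j \<le> ts ! (length ts - 1)"
    using so j by (cases "j = length ts - 1") (auto simp: sorted_wrt_iff_nth_less less_imp_le)
  ultimately show ?thesis using h l ne j by (simp add: hd_conv_nth last_conv_nth)
qed

lemma ts_near:
  assumes "admissible_times \<tau> ts" "mesh_less \<tau> \<delta> ts" "0 \<le> t" "t \<le> \<tau>"
  shows "\<exists>s\<in>set ts. \<bar>t - s\<bar> < \<delta>"
proof -
  from assms(1) have ne: "ts \<noteq> []" and so: "sorted_wrt (<) ts" and h: "hd ts = 0"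
    unfolding admissible_times_def by auto
  define S where "S = {i. i < length ts \<and> ts ! i \<le> t}"
  have fin: "finite S" unfolding S_def by simp
  have "0 \<in> S" unfolding S_def using ne h assms(3) by (simp add: hd_conv_nth)
  then have neS: "S \<noteq> {}" by auto
  define i where "i = Max S"
  have iS: "i \<in> S" unfolding i_def using fin neS by simp
  have imax: "j \<in> S \<Longrightarrow> j \<le> i" for j unfolding i_def using fin by simp
  have il: "i < length ts" and it: "ts ! i \<le> t" using iS unfolding S_def by auto
  have gap: "\<bar>(ts @ [\<tau>]) ! (i + 1) - ts ! i\<bar> < \<delta>" using assms(2) il unfolding mesh_less_def by blast
  have "t - ts ! i < \<delta>"
  proof (cases "i + 1 < length ts")
    case True
    then have "i + 1 \<notin> S" using imax by fastforce
    then have "t < ts ! (i + 1)" using True unfolding S_def by auto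
    moreover have "(ts @ [\<tau>]) ! (i + 1) = ts ! (i + 1)" using True by (simp add: nth_append)
    ultimately show ?thesis using gap by linarith
  next
    case False
    then have "i + 1 = length ts" using il by simp
    then have "(ts @ [\<tau>]) ! (i + 1) = \<tau>" by simp
    then show ?thesis using gap assms(4) by linarith
  qed
  then have "\<bar>t - ts ! i\<bar> < \<delta>" using it by simp
  then show ?thesis using il by (metis nth_mem)
qed

lemma uniform_ts:
  assumes tau: "\<tau> > 0" and d: "\<delta> > 0"
  shows "\<exists>ts. admissible_times \<tau> ts \<and> mesh_less \<tau> \<delta> ts"
proof -
  obtain N :: nat where N: "\<tau> / \<delta> < N" using reals_Archimedean2 by blast
  have Npos: "N > 0" using N tau d by (metis divide_pos_pos of_nat_0 of_nat_0_less_iff order_less_trans)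
  have step: "\<tau> / N < \<delta>" using N Npos d by (simp add: field_simps)
  define ts where "ts = map (\<lambda>k. \<tau> * real k / real N) [0..<N]"
  have len: "length ts = N" unfolding ts_def by simp
  have nth: "k < N \<Longrightarrow> ts ! k = \<tau> * real k / real N" for k unfolding ts_def by simp
  have adm: "admissible_times \<tau> ts"
    unfolding admissible_times_def
  proof (intro conjI)
    show "ts \<noteq> []" using Npos unfolding ts_def by simp
    show "sorted_wrt (<) ts" unfolding ts_def sorted_wrt_map
      by (rule sorted_wrt_mono_rel[OF _ sorted_wrt_upt]) (use tau Npos in \<open>auto simp: divide_strict_right_mono\<close>)
    show "hd ts = 0" using Npos unfolding ts_def by (simp add: hd_map)
    show "last ts \<le> \<tau>" using Npos tau unfolding ts_def by (simp add: last_map field_simps)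
  qed
  have "mesh_less \<tau> \<delta> ts"
    unfolding mesh_less_def len
  proof (intro allI impI)
    fix i assume i: "i < N"
    have "(ts @ [\<tau>]) ! (i + 1) - ts ! i = \<tau> / N"
    proof (cases "i + 1 < N")
      case True
      then show ?thesis using i len by (simp add: nth_append nth field_simps)
    next
      case False
      then have "i + 1 = N" using i by simp
      then have "(ts @ [\<tau>]) ! (i + 1) = \<tau>" using len by (simp add: nth_append)
      moreover have rN: "real N = real i + 1" using \<open>i + 1 = N\<close> by linarith
      ultimately show ?thesis using i Npos by (simp add: nth field_simps rN algebra_simps)
    qed
    then show "\<bar>(ts @ [\<tau>]) ! (i + 1) - ts ! i\<bar> < \<delta>" using step tau by simp
  qed
  then show ?thesis using adm by blast
qed


context mc
begin

definition Sint where "Sint x = (\<Sum>\<^sub>\<infinity>g\<in>G. integral {0..\<tau>} (\<lambda>t. f x t g))"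
definition FF where "FF = (\<lambda>(g, t). exp_op t B g)"
definition P where "P ts x = (\<Sum>\<^sub>\<infinity>i\<in>G \<times> set ts. (cmod (cinner x (FF i)))\<^sup>2)"

lemma sum_prod_split: "(\<Sum>i\<in>A1 \<times> A2. h i) = (\<Sum>a\<in>A1. \<Sum>b\<in>A2. h (a, b))"
  by (simp add: sum.cartesian_product)

lemma FF_term: "(cmod (cinner x (FF (g, s))))\<^sup>2 = f x s g"
  by (simp add: FF_def f_def E_def)

lemma P_fin:
  assumes "finite F'" "F' \<subseteq> G \<times> set ts"
  shows "(\<Sum>i\<in>F'. (cmod (cinner x (FF i)))\<^sup>2) \<le> (\<Sum>s\<in>set ts. \<Sum>g\<in>fst ` F'. f x s g)"
proof -
  have sub: "F' \<subseteq> fst ` F' \<times> set ts" using assms(2) by force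
  have "(\<Sum>i\<in>F'. (cmod (cinner x (FF i)))\<^sup>2) \<le> (\<Sum>i\<in>fst ` F' \<times> set ts. (cmod (cinner x (FF i)))\<^sup>2)"
    by (rule sum_mono2) (use sub assms(1) in auto)
  also have "\<dots> = (\<Sum>g\<in>fst ` F'. \<Sum>s\<in>set ts. f x s g)"
    by (simp add: sum_prod_split FF_term)
  also have "\<dots> = (\<Sum>s\<in>set ts. \<Sum>g\<in>fst ` F'. f x s g)" by (rule sum.swap)
  finally show ?thesis .
qed

lemma P_fin_bound:
  assumes adm: "admissible_times \<tau> ts" and "finite F'" "F' \<subseteq> G \<times> set ts"
  shows "(\<Sum>i\<in>F'. (cmod (cinner x (FF i)))\<^sup>2) \<le> card (set ts) * (Cb * (norm x)\<^sup>2)"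
proof -
  have "(\<Sum>s\<in>set ts. \<Sum>g\<in>fst ` F'. f x s g) \<le> (\<Sum>s\<in>set ts. Cb * (norm x)\<^sup>2)"
  proof (rule sum_mono)
    fix s assume s: "s \<in> set ts"
    have "\<bar>s\<bar> \<le> \<tau>" using ts_range[OF adm s] by simp
    then show "(\<Sum>g\<in>fst ` F'. f x s g) \<le> Cb * (norm x)\<^sup>2"
      by (rule UB) (use assms in auto)
  qed
  then show ?thesis using P_fin[OF assms(2,3), of x] by simp
qed

lemma P_summable:
  assumes adm: "admissible_times \<tau> ts"
  shows "(\<lambda>i. (cmod (cinner x (FF i)))\<^sup>2) summable_on G \<times> set ts"
  by (rule nonneg_bdd_above_summable_on)
     (use P_fin_bound[OF adm] in \<open>auto intro!: bdd_aboveI[of _ "card (set ts) * (Cb * (norm x)\<^sup>2)"]\<close>)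

lemma frame_iff:
  assumes adm: "admissible_times \<tau> ts"
  shows "frame_family (G \<times> set ts) FF \<longleftrightarrow> (\<exists>c>0. \<forall>x. c * (norm x)\<^sup>2 \<le> P ts x)"
proof -
  have "bessel_family (G \<times> set ts) FF"
    unfolding bessel_family_def
  proof (intro exI allI conjI)
    fix x
    show "(\<lambda>i. (cmod (cinner x (FF i)))\<^sup>2) summable_on G \<times> set ts" by (rule P_summable[OF adm])
    show "(\<Sum>\<^sub>\<infinity>i\<in>G \<times> set ts. (cmod (cinner x (FF i)))\<^sup>2) \<le> (card (set ts) * Cb) * (norm x)\<^sup>2"
      using infsum_le_finite_sums[OF P_summable[OF adm] P_fin_bound[OF adm]] by (simp add: mult.assoc)
  qed
  then show ?thesis unfolding frame_family_def P_def by simp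
qed

lemma SC_iff:
  "(\<exists>c1>0. \<exists>c2>0. \<forall>x.
      (\<forall>g\<in>G. (\<lambda>t. (cmod (cinner x (exp_op t B g)))\<^sup>2) integrable_on {0..<\<tau>}) \<and>
      (\<lambda>g. integral {0..<\<tau>} (\<lambda>t. (cmod (cinner x (exp_op t B g)))\<^sup>2)) summable_on G \<and>
      c1 * (norm x)\<^sup>2 \<le> (\<Sum>\<^sub>\<infinity>g\<in>G. integral {0..<\<tau>} (\<lambda>t. (cmod (cinner x (exp_op t B g)))\<^sup>2)) \<and>
      (\<Sum>\<^sub>\<infinity>g\<in>G. integral {0..<\<tau>} (\<lambda>t. (cmod (cinner x (exp_op t B g)))\<^sup>2)) \<le> c2 * (norm x)\<^sup>2)
   \<longleftrightarrow> (\<exists>c>0. \<forall>x. c * (norm x)\<^sup>2 \<le> Sint x)"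
proof -
  have raw: "(\<lambda>t. (cmod (cinner x (exp_op t B g)))\<^sup>2) = (\<lambda>t. f x t g)" for x g
    by (simp add: f_def E_def)
  have ii: "(\<Sum>\<^sub>\<infinity>g\<in>G. integral {0..<\<tau>} (\<lambda>t. f x t g)) = Sint x" for x
    unfolding Sint_def by (simp add: f_integral_Ico)
  have ss: "(\<lambda>g. integral {0..<\<tau>} (\<lambda>t. f x t g)) summable_on G" for x
    by (simp add: f_integral_Ico sumG_summable)
  have ub: "Sint x \<le> (\<tau> * Cb + 1) * (norm x)\<^sup>2" for x
  proof -
    have "\<tau> * Cb * (norm x)\<^sup>2 \<le> (\<tau> * Cb + 1) * (norm x)\<^sup>2" by (simp add: algebra_simps)
    then show ?thesis using sumG_UB[of x] unfolding Sint_def by linarith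
  qed
  have c2: "\<tau> * Cb + 1 > 0" using taupos Cb_nonneg by (simp add: add_nonneg_pos)
  show ?thesis unfolding raw ii using ss f_int_Ico ub c2 by blast
qed

lemma one_two:
  assumes c1: "c1 > 0" and low: "\<And>x. c1 * (norm x)\<^sup>2 \<le> Sint x"
  shows "\<exists>\<delta>>0. \<forall>ts. admissible_times \<tau> ts \<and> mesh_less \<tau> \<delta> ts \<longrightarrow> (\<exists>c>0. \<forall>x. c * (norm x)\<^sup>2 \<le> P ts x)"
proof -
  define D where "D = 4 * \<tau> * C * L\<^sup>2"
  have D: "D \<ge> 0" unfolding D_def using taupos Cpos by simp
  define \<delta> where "\<delta> = min 1 (c1 / (D + 1))"
  have dpos: "\<delta> > 0" unfolding \<delta>_def using c1 D by simp
  have dsq: "2 * \<tau> * C * (\<delta> * L)\<^sup>2 \<le> c1 / 2"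
  proof -
    have "\<delta> \<le> 1" unfolding \<delta>_def by simp
    then have "\<delta>\<^sup>2 \<le> \<delta>" using dpos unfolding power2_eq_square by (intro mult_left_le_one_le) auto
    also have "\<dots> \<le> c1 / (D + 1)" unfolding \<delta>_def by simp
    finally have "\<delta>\<^sup>2 \<le> c1 / (D + 1)" .
    then have "D / 2 * \<delta>\<^sup>2 \<le> D / 2 * (c1 / (D + 1))" using D by (intro mult_left_mono) auto
    also have "\<dots> \<le> c1 / 2" using D c1 by (simp add: field_simps)
    finally show ?thesis unfolding D_def by (simp add: power_mult_distrib algebra_simps)
  qed
  show ?thesis
  proof (rule exI[of _ \<delta>], intro conjI allI impI dpos)
    fix ts assume ts: "admissible_times \<tau> ts \<and> mesh_less \<tau> \<delta> ts"
    then have adm: "admissible_times \<tau> ts" and mesh: "mesh_less \<tau> \<delta> ts" by auto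
    have key: "Sint x \<le> \<tau> * (2 * P ts x + 2 * C * (\<delta> * L)\<^sup>2 * (norm x)\<^sup>2)" for x
    proof -
      define K2 where "K2 = 2 * P ts x + 2 * C * (\<delta> * L)\<^sup>2 * (norm x)\<^sup>2"
      have pw: "(\<Sum>g\<in>F. f x t g) \<le> K2" if F: "finite F" "F \<subseteq> G" and t: "t \<in> {0..\<tau>}" for F t
      proof -
        obtain s where s: "s \<in> set ts" "\<bar>t - s\<bar> < \<delta>" using ts_near[OF adm mesh] t by auto
        have sr: "\<bar>s\<bar> \<le> \<tau>" using ts_range[OF adm s(1)] by simp
        have "(\<Sum>g\<in>F. f x t g) \<le> 2 * (\<Sum>g\<in>F. f x s g) + 2 * C * (\<bar>t - s\<bar> * L)\<^sup>2 * (norm x)\<^sup>2"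
          by (rule PW) (use t sr F in auto)
        also have "(\<bar>t - s\<bar> * L)\<^sup>2 \<le> (\<delta> * L)\<^sup>2"
          using s(2) L_pos by (intro power_mono mult_right_mono) auto
        also have "(\<Sum>g\<in>F. f x s g) \<le> P ts x"
        proof -
          have "(\<Sum>g\<in>F. f x s g) = (\<Sum>i\<in>F \<times> {s}. (cmod (cinner x (FF i)))\<^sup>2)"
            by (simp add: sum_prod_split FF_term)
          also have "\<dots> \<le> P ts x" unfolding P_def
            by (rule finite_sum_le_infsum[OF P_summable[OF adm]]) (use F s in auto)
          finally show ?thesis .
        qed
        finally show ?thesis unfolding K2_def using Cpos by (simp add: mult_left_mono mult_right_mono)
      qed
      have "(\<Sum>g\<in>F. integral {0..\<tau>} (\<lambda>t. f x t g)) \<le> \<tau> * K2" if F: "finite F" "F \<subseteq> G" for F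
      proof -
        have "integral {0..\<tau>} (\<lambda>t. \<Sum>g\<in>F. f x t g) \<le> integral {0..\<tau>} (\<lambda>t. K2)"
          by (rule integral_le[OF sum_int_int]) (use pw F in auto)
        then show ?thesis unfolding int_sum using taupos by simp
      qed
      then have "Sint x \<le> \<tau> * K2" unfolding Sint_def
        by (intro infsum_le_finite_sums[OF sumG_summable])
      then show ?thesis unfolding K2_def .
    qed
    show "\<exists>c>0. \<forall>x. c * (norm x)\<^sup>2 \<le> P ts x"
    proof (intro exI[of _ "c1 / (4 * \<tau>)"] conjI allI)
      show "c1 / (4 * \<tau>) > 0" using c1 taupos by simp
      fix x
      have "c1 * (norm x)\<^sup>2 \<le> 2 * \<tau> * P ts x + 2 * \<tau> * C * (\<delta> * L)\<^sup>2 * (norm x)\<^sup>2"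
        using low[of x] key[of x] by (simp add: algebra_simps)
      also have "2 * \<tau> * C * (\<delta> * L)\<^sup>2 * (norm x)\<^sup>2 \<le> c1 / 2 * (norm x)\<^sup>2"
        using mult_right_mono[OF dsq, of "(norm x)\<^sup>2"] by simp
      finally have "c1 / 2 * (norm x)\<^sup>2 \<le> 2 * \<tau> * P ts x" by simp
      then show "c1 / (4 * \<tau>) * (norm x)\<^sup>2 \<le> P ts x" using taupos by (simp add: field_simps)
    qed
  qed
qed

lemma three_one:
  assumes adm: "admissible_times \<tau> ts" and c: "c > 0" and low: "\<And>x. c * (norm x)\<^sup>2 \<le> P ts x"
  shows "\<exists>c'>0. \<forall>x. c' * (norm x)\<^sup>2 \<le> Sint x"
proof -
  define n where "n = real (card (set ts))"
  have n: "n \<ge> 1" unfolding n_def using adm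
    by (simp add: admissible_times_def Suc_leI card_gt_0_iff)
  define D where "D = 4 * n * C * L\<^sup>2"
  have D: "D \<ge> 0" unfolding D_def using n Cpos by simp
  define h where "h = min (min \<tau> 1) (c / (D + 1))"
  have hpos: "h > 0" unfolding h_def using c D taupos by simp
  have ht: "h \<le> \<tau>" unfolding h_def by simp
  have hsq: "2 * n * C * (h * L)\<^sup>2 \<le> c / 2"
  proof -
    have "h \<le> 1" unfolding h_def by simp
    then have "h\<^sup>2 \<le> h" using hpos unfolding power2_eq_square by (intro mult_left_le_one_le) auto
    also have "\<dots> \<le> c / (D + 1)" unfolding h_def by simp
    finally have "h\<^sup>2 \<le> c / (D + 1)" .
    then have "D / 2 * h\<^sup>2 \<le> D / 2 * (c / (D + 1))" using D by (intro mult_left_mono) auto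
    also have "\<dots> \<le> c / 2" using D c by (simp add: field_simps)
    finally show ?thesis unfolding D_def by (simp add: power_mult_distrib algebra_simps)
  qed
  have Sint_nonneg: "Sint x \<ge> 0" for x unfolding Sint_def by (rule infsum_nonneg) (simp add: int_nonneg)
  have key: "h * (\<Sum>g\<in>F. f x s g) \<le> 2 * Sint x + h * (2 * C * (h * L)\<^sup>2 * (norm x)\<^sup>2)"
    if s: "s \<in> set ts" and F: "finite F" "F \<subseteq> G" for x s F
  proof -
    define K2 where "K2 = 2 * C * (h * L)\<^sup>2 * (norm x)\<^sup>2"
    have sr: "0 \<le> s" "s \<le> \<tau>" using ts_range[OF adm s] by auto
    define a where "a = (if s + h \<le> \<tau> then s else \<tau> - h)"
    have a: "0 \<le> a" "a + h \<le> \<tau>" unfolding a_def using sr ht by auto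
    have near: "\<bar>s - t\<bar> \<le> h" if "t \<in> {a..a+h}" for t
      using that sr unfolding a_def by (auto split: if_splits)
    have pw: "(\<Sum>g\<in>F. f x s g) \<le> 2 * (\<Sum>g\<in>F. f x t g) + K2" if t: "t \<in> {a..a+h}" for t
    proof -
      have "(\<Sum>g\<in>F. f x s g) \<le> 2 * (\<Sum>g\<in>F. f x t g) + 2 * C * (\<bar>s - t\<bar> * L)\<^sup>2 * (norm x)\<^sup>2"
        by (rule PW) (use t a sr F hpos in auto)
      also have "(\<bar>s - t\<bar> * L)\<^sup>2 \<le> (h * L)\<^sup>2"
        using near[OF t] L_pos by (intro power_mono mult_right_mono) auto
      finally show ?thesis unfolding K2_def using Cpos by (simp add: mult_left_mono mult_right_mono)
    qed
    have sub: "{a..a+h} \<subseteq> {0..\<tau>}" using a by auto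
    have intab: "(\<lambda>t. \<Sum>g\<in>F. f x t g) integrable_on {a..a+h}"
      by (rule integrable_on_subinterval[OF sum_int_int]) (use sub in auto)
    have "integral {a..a+h} (\<lambda>t. \<Sum>g\<in>F. f x s g) \<le> integral {a..a+h} (\<lambda>t. 2 * (\<Sum>g\<in>F. f x t g) + K2)"
      by (rule integral_le) (use pw intab in \<open>auto intro!: integrable_add integrable_cmul\<close>)
    also have "\<dots> = 2 * integral {a..a+h} (\<lambda>t. \<Sum>g\<in>F. f x t g) + h * K2"
    proof -
      have i2: "(\<lambda>t. 2 * (\<Sum>g\<in>F. f x t g)) integrable_on {a..a+h}"
        using integrable_on_cmult_left[OF intab, of 2] by simp
      have "integral {a..a+h} (\<lambda>t. 2 * (\<Sum>g\<in>F. f x t g) + K2)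
          = integral {a..a+h} (\<lambda>t. 2 * (\<Sum>g\<in>F. f x t g)) + integral {a..a+h} (\<lambda>t. K2)"
        by (rule integral_add[OF i2]) auto
      then show ?thesis using hpos by simp
    qed
    also have "integral {a..a+h} (\<lambda>t. \<Sum>g\<in>F. f x t g) \<le> integral {0..\<tau>} (\<lambda>t. \<Sum>g\<in>F. f x t g)"
      by (rule integral_subset_le[OF sub intab sum_int_int]) (simp add: sum_nonneg f_nonneg)
    also have "\<dots> = (\<Sum>g\<in>F. integral {0..\<tau>} (\<lambda>t. f x t g))" by (rule int_sum[symmetric])
    also have "\<dots> \<le> Sint x" unfolding Sint_def
      by (rule finite_sum_le_infsum[OF sumG_summable F]) (simp add: int_nonneg)
    finally show ?thesis using hpos unfolding K2_def by (simp add: mult.commute)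
  qed
  have Pb: "h * P ts x \<le> n * (2 * Sint x + h * (2 * C * (h * L)\<^sup>2 * (norm x)\<^sup>2))" for x
  proof -
    define R where "R = n * (2 * Sint x + h * (2 * C * (h * L)\<^sup>2 * (norm x)\<^sup>2))"
    have "P ts x \<le> R / h" unfolding P_def
    proof (rule infsum_le_finite_sums[OF P_summable[OF adm]])
      fix F' assume F': "finite F'" "F' \<subseteq> G \<times> set ts"
      have fF: "finite (fst ` F')" "fst ` F' \<subseteq> G" using F' by auto
      have "h * (\<Sum>i\<in>F'. (cmod (cinner x (FF i)))\<^sup>2) \<le> h * (\<Sum>s\<in>set ts. \<Sum>g\<in>fst ` F'. f x s g)"
        using P_fin[OF F'] hpos by (simp add: mult_left_mono)
      also have "\<dots> = (\<Sum>s\<in>set ts. h * (\<Sum>g\<in>fst ` F'. f x s g))" by (simp add: sum_distrib_left)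
      also have "\<dots> \<le> (\<Sum>s\<in>set ts. 2 * Sint x + h * (2 * C * (h * L)\<^sup>2 * (norm x)\<^sup>2))"
        by (rule sum_mono) (rule key[OF _ fF], simp)
      also have "\<dots> = R" unfolding R_def n_def by simp
      finally show "(\<Sum>i\<in>F'. (cmod (cinner x (FF i)))\<^sup>2) \<le> R / h" using hpos by (simp add: field_simps)
    qed
    then show ?thesis using hpos unfolding R_def by (simp add: field_simps)
  qed
  show ?thesis
  proof (intro exI[of _ "h * c / (4 * n)"] conjI allI)
    show "h * c / (4 * n) > 0" using hpos c n by simp
    fix x
    have "h * (c * (norm x)\<^sup>2) \<le> h * P ts x" using low[of x] hpos by (simp add: mult_left_mono)
    also have "\<dots> \<le> 2 * n * Sint x + h * (2 * n * C * (h * L)\<^sup>2) * (norm x)\<^sup>2"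
      using Pb[of x] by (simp add: algebra_simps)
    also have "h * (2 * n * C * (h * L)\<^sup>2) * (norm x)\<^sup>2 \<le> h * (c / 2) * (norm x)\<^sup>2"
      using hsq hpos by (intro mult_right_mono mult_left_mono) auto
    finally have "h * c / 2 * (norm x)\<^sup>2 \<le> 2 * n * Sint x" by (simp add: algebra_simps)
    then show "h * c / (4 * n) * (norm x)\<^sup>2 \<le> Sint x" using n by (simp add: field_simps)
  qed
qed

end


theorem theorem3p6:
  fixes A :: "'a::chilbert \<Rightarrow> 'a" and G :: "'a set" and \<tau> :: real
  assumes separable: "\<exists>D::'a set. countable D \<and> closure D = UNIV"
    and A_bounded: "bounded_clinear_op A"
    and tau_pos: "0 < \<tau>"
    and G_countable: "countable G"
    and G_bessel: "bessel_family G (\<lambda>g. g)"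
  shows "(semicont_frame A G \<tau>
          \<longleftrightarrow> (\<exists>\<delta>>0. \<forall>ts. admissible_times \<tau> ts \<and> mesh_less \<tau> \<delta> ts \<longrightarrow>
                 frame_family (G \<times> set ts) (\<lambda>(g, t). exp_op t (adjoint_op A) g)))
       \<and> (semicont_frame A G \<tau>
          \<longleftrightarrow> (\<exists>ts. admissible_times \<tau> ts \<and>
                 frame_family (G \<times> set ts) (\<lambda>(g, t). exp_op t (adjoint_op A) g)))"
proof -
  define B where "B = adjoint_op A"
  have Bop: "bounded_clinear_op B" unfolding B_def by (rule adjoint_props[OF A_bounded])
  obtain K0 where Badd: "\<And>x y. B (x + y) = B x + B y" and BscC: "\<And>c x. B (scaleC c x) = scaleC c (B x)"
    and K0: "\<And>x. norm (B x) \<le> K0 * norm x"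
    using Bop unfolding bounded_clinear_op_def by blast
  define K where "K = \<bar>K0\<bar>"
  have Kb: "norm (B x) \<le> K * norm x" for x
    using K0[of x] unfolding K_def by (meson abs_ge_self mult_right_mono norm_ge_zero order_trans)
  obtain C0 where C0: "\<And>x. (\<lambda>g. (cmod (cinner x g))\<^sup>2) summable_on G \<and>
      (\<Sum>\<^sub>\<infinity>g\<in>G. (cmod (cinner x g))\<^sup>2) \<le> C0 * (norm x)\<^sup>2"
    using G_bessel unfolding bessel_family_def by blast
  define C where "C = \<bar>C0\<bar>"
  have bes: "(\<Sum>g\<in>F. (cmod (cinner y g))\<^sup>2) \<le> C * (norm y)\<^sup>2" if "finite F" "F \<subseteq> G" for y F
  proof -
    have "(\<Sum>g\<in>F. (cmod (cinner y g))\<^sup>2) \<le> (\<Sum>\<^sub>\<infinity>g\<in>G. (cmod (cinner y g))\<^sup>2)"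
      by (rule finite_sum_le_infsum) (use C0 that in auto)
    also have "\<dots> \<le> C0 * (norm y)\<^sup>2" using C0 by blast
    also have "\<dots> \<le> C * (norm y)\<^sup>2" unfolding C_def by (intro mult_right_mono) auto
    finally show ?thesis .
  qed
  interpret M: mc B K G C \<tau>
    by unfold_locales (use Badd BscC Kb bes tau_pos in \<open>auto simp: K_def C_def\<close>)
  have SC: "semicont_frame A G \<tau> \<longleftrightarrow> (\<exists>c>0. \<forall>x. c * (norm x)\<^sup>2 \<le> M.Sint x)"
    unfolding semicont_frame_def B_def[symmetric] by (rule M.SC_iff)
  have FR: "frame_family (G \<times> set ts) (\<lambda>(g, t). exp_op t (adjoint_op A) g)
      \<longleftrightarrow> (\<exists>c>0. \<forall>x. c * (norm x)\<^sup>2 \<le> M.P ts x)" if "admissible_times \<tau> ts" for ts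
  proof -
    have "M.FF = (\<lambda>(g, t). exp_op t (adjoint_op A) g)" unfolding M.FF_def by (simp add: B_def)
    then show ?thesis using M.frame_iff[OF that] by simp
  qed
  have 12: "semicont_frame A G \<tau> \<Longrightarrow> (\<exists>\<delta>>0. \<forall>ts. admissible_times \<tau> ts \<and> mesh_less \<tau> \<delta> ts \<longrightarrow>
                 frame_family (G \<times> set ts) (\<lambda>(g, t). exp_op t (adjoint_op A) g))"
  proof -
    assume "semicont_frame A G \<tau>"
    then obtain c1 where "c1 > 0" "\<And>x. c1 * (norm x)\<^sup>2 \<le> M.Sint x" using SC by blast
    from M.one_two[OF this] obtain \<delta> where "\<delta> > 0"
      and d: "\<And>ts. admissible_times \<tau> ts \<and> mesh_less \<tau> \<delta> ts \<Longrightarrow> (\<exists>c>0. \<forall>x. c * (norm x)\<^sup>2 \<le> M.P ts x)"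
      by blast
    then show ?thesis using FR by blast
  qed
  have 23: "(\<exists>\<delta>>0. \<forall>ts. admissible_times \<tau> ts \<and> mesh_less \<tau> \<delta> ts \<longrightarrow>
                 frame_family (G \<times> set ts) (\<lambda>(g, t). exp_op t (adjoint_op A) g))
    \<Longrightarrow> (\<exists>ts. admissible_times \<tau> ts \<and>
                 frame_family (G \<times> set ts) (\<lambda>(g, t). exp_op t (adjoint_op A) g))"
    using uniform_ts[OF tau_pos] by blast
  have 31: "(\<exists>ts. admissible_times \<tau> ts \<and>
                 frame_family (G \<times> set ts) (\<lambda>(g, t). exp_op t (adjoint_op A) g))
    \<Longrightarrow> semicont_frame A G \<tau>"
  proof -
    assume "\<exists>ts. admissible_times \<tau> ts \<and> frame_family (G \<times> set ts) (\<lambda>(g, t). exp_op t (adjoint_op A) g)"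
    then obtain ts where adm: "admissible_times \<tau> ts"
      and fr: "frame_family (G \<times> set ts) (\<lambda>(g, t). exp_op t (adjoint_op A) g)" by blast
    obtain c where "c > 0" "\<And>x. c * (norm x)\<^sup>2 \<le> M.P ts x" using fr FR[OF adm] by blast
    from M.three_one[OF adm this] show ?thesis using SC by blast
  qed
  show ?thesis using 12 23 31 by blast
qed


end
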